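(* (i) Let $B_1,\dots,B_n$ be subspaces of a finite-dimensional vector space $W$ over a finite field and let $\beta\subseteq\{1,\dots,n\}$. Then there exists a subspace $A$ of $W$ such that $H(T_A(B_j))=H(B_j\mid B_{\beta\setminus j})$ for all $j\in\beta$, $H(T_A(B_j):j\in\beta)=\sum_{j\in\beta}H(T_A(B_j))$, and $H(A)=H(B_\beta)-\sum_{j\in\beta}H(B_j\mid B_{\beta\setminus j})$. (ii) Let $\{B^i_1,\dots,B^i_n\}_{i=1}^\infty$ be a sequence of collections of subspaces (for each $i$, of a finite-dimensional vector space $W^i$ over a finite field), $\beta\subseteq\{1,\dots,n\}$, and $k(i)>0$ with $\lim_{i\to\infty}\frac{1}{k(i)}\big(H(B^i_\beta)-\sum_{j\in\beta}H(B^i_j\mid B^i_{\beta\setminus j})\big)=0$. Then there exist subspaces $A^i$ of $W^i$ such that for every $i$, $\sum_{j\in\beta}H(T_{A^i}(B^i_j))=H(T_{A^i}(B^i_j):j\in\beta)$, and for all $\alpha\subseteq\{1,\dots,n\}$, $\lim_{i\to\infty}\frac{1}{k(i)}H(T_{A^i}(B^i_j):j\in\alpha)=\lim_{i\to\infty}\frac{1}{k(i)}H(B^i_\alpha)$ (in the sense that if either limit exists then both exist and are equal).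
   Context: For subspaces, $\langle\cdots\rangle$ denotes the span. $B_\gamma$ denotes the collection $\{B_j:j\in\gamma\}$ and $B_{\beta\setminus j}=\{B_l:l\in\beta, l\ne j\}$. $H(B_\gamma)=H(B_j:j\in\gamma)=\dim\langle B_j:j\in\gamma\rangle$, $H(B)=\dim B$, and $H(\mathcal{S}\mid\mathcal{R})=\dim\langle\mathcal{S},\mathcal{R}\rangle-\dim\langle\mathcal{R}\rangle$. For a subspace $A$ of $W$, choose any $A^*$ with $\langle A,A^*\rangle=W$, $A\cap A^*=\{0\}$; for $u=u_1+u_2$ with $u_1\in A^*,u_2\in A$ set $T_A(u)=u_1$, and $T_A(B)=\{T_A(u):u\in B\}$. (The dimensions in the statement do not depend on the choice of $A^*$.) *)

theory Defs
  imports "HOL-Analysis.Analysis"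
begin

text \<open>Subspaces, spans and dimensions are the library notions module.subspace,
  module.span and vector_space.dim (dim S = dimension of the span of S).\<close>

definition fin_dim :: "('f::field \<Rightarrow> 'v::ab_group_add \<Rightarrow> 'v) \<Rightarrow> 'v set \<Rightarrow> bool" where
  "fin_dim sc W \<longleftrightarrow> (\<exists>S. finite S \<and> S \<subseteq> W \<and> module.span sc S = W)"

text \<open>H(B_gamma) = dim of the span of the B_j, j in gamma.\<close>
definition Hs :: "('f::field \<Rightarrow> 'v::ab_group_add \<Rightarrow> 'v) \<Rightarrow> (nat \<Rightarrow> 'v set) \<Rightarrow> nat set \<Rightarrow> nat" where
  "Hs sc B \<gamma> = vector_space.dim sc (\<Union>j\<in>\<gamma>. B j)"

definition Hcond :: "('f::field \<Rightarrow> 'v::ab_group_add \<Rightarrow> 'v) \<Rightarrow> 'v set \<Rightarrow> 'v set \<Rightarrow> nat" where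
  "Hcond sc S R = vector_space.dim sc (S \<union> R) - vector_space.dim sc R"

definition is_compl :: "('f::field \<Rightarrow> 'v::ab_group_add \<Rightarrow> 'v) \<Rightarrow> 'v set \<Rightarrow> 'v set \<Rightarrow> 'v set \<Rightarrow> bool" where
  "is_compl sc W A C \<longleftrightarrow> module.subspace sc C \<and> C \<subseteq> W \<and>
     module.span sc (A \<union> C) = W \<and> A \<inter> C = {0}"

text \<open>A chosen complement A* of A in W (the dimensions do not depend on the choice).\<close>
definition cmpl :: "('f::field \<Rightarrow> 'v::ab_group_add \<Rightarrow> 'v) \<Rightarrow> 'v set \<Rightarrow> 'v set \<Rightarrow> 'v set" where
  "cmpl sc W A = (SOME C. is_compl sc W A C)"

definition TA :: "('f::field \<Rightarrow> 'v::ab_group_add \<Rightarrow> 'v) \<Rightarrow> 'v set \<Rightarrow> 'v set \<Rightarrow> 'v \<Rightarrow> 'v" where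
  "TA sc W A u = (THE u1. u1 \<in> cmpl sc W A \<and> u - u1 \<in> A)"

end

theory Submission
  imports Defs
begin

locale fdW = vector_space +
  fixes W assumes Wsub: "subspace W" and Wfd: "fin_dim scale W"
begin

lemma indep_fin: assumes "independent B" "B \<subseteq> W" shows "finite B"
proof -
  obtain S where S: "finite S" "S \<subseteq> W" "span S = W" using Wfd unfolding fin_dim_def by blast
  show ?thesis using independent_span_bound[OF S(1) assms(1)] assms(2) S(3) by auto
qed

lemma dim_mono_W: assumes "V \<subseteq> span U" "U \<subseteq> W" shows "dim V \<le> dim U"
proof -
  obtain B where B: "B \<subseteq> U" "independent B" "U \<subseteq> span B" "card B = dim U"
    using basis_exists by blast
  have "finite B" using indep_fin B assms by blast
  have "V \<subseteq> span B" using assms(1) B(3) by (metis span_mono span_span order_trans)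
  then show ?thesis using dim_le_card[OF _ \<open>finite B\<close>] B(4) by simp
qed

lemma dim_zero_sub: assumes "dim V = 0" "V \<subseteq> W" shows "V \<subseteq> {0}"
proof
  fix x assume x: "x \<in> V"
  show "x \<in> {0}"
  proof (rule ccontr)
    assume "x \<notin> {0}"
    then have "independent {x}" using independent_insert[of x "{}"] by auto
    then have "dim {x} = 1" using dim_eq_card_independent by fastforce
    moreover have "dim {x} \<le> dim V" using dim_mono_W[of "{x}" V] x assms span_superset by blast
    ultimately show False using assms by simp
  qed
qed

lemma dim_zero_set: "dim {0} = 0"
  using dim_le_card[of "{0}" "{}"] by simp

lemma modular:
  assumes U: "subspace U" "U \<subseteq> W" and V: "subspace V" "V \<subseteq> W"
  shows "dim (U \<union> V) + dim (U \<inter> V) = dim U + dim V"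
proof -
  obtain B where B: "B \<subseteq> U \<inter> V" "independent B" "U \<inter> V \<subseteq> span B" "card B = dim (U \<inter> V)"
    using basis_exists by blast
  obtain C where C: "B \<subseteq> C" "C \<subseteq> U" "independent C" "U \<subseteq> span C"
    using maximal_independent_subset_extend[of B U] B by blast
  obtain E where E: "C \<subseteq> E" "E \<subseteq> U \<union> V" "independent E" "U \<union> V \<subseteq> span E"
    using maximal_independent_subset_extend[of C "U \<union> V"] C by blast
  have finE: "finite E" using indep_fin E U V by blast
  define F where "F = E - C"
  have FV: "F \<subseteq> V"
  proof
    fix e assume e: "e \<in> F"
    show "e \<in> V"
    proof (rule ccontr)
      assume "e \<notin> V"
      then have "e \<in> U" using e E F_def by auto
      then have "e \<in> span (E - {e})" using C(4) span_mono[of C "E - {e}"] e F_def E(1) by blast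
      moreover have "E = insert e (E - {e})" using e F_def by blast
      ultimately show False using E(3) independent_insert[of e "E - {e}"] by simp
    qed
  qed
  have BF: "B \<inter> F = {}" using F_def C by blast
  have "B \<union> F \<subseteq> E" using C(1) E(1) F_def by blast
  then have indBF: "independent (B \<union> F)" using independent_mono[OF E(3)] by blast
  have CFE: "C \<union> F = E" using E(1) F_def by blast
  then have spanE: "span E = span (C \<union> F)" by simp
  have "V \<subseteq> span (B \<union> F)"
  proof
    fix v assume v: "v \<in> V"
    then have "v \<in> span (C \<union> F)" using E(4) spanE by blast
    then obtain c f where cf: "v = c + f" "c \<in> span C" "f \<in> span F" using span_Un by blast
    have "c \<in> U" using cf(2) span_minimal[OF C(2) U(1)] by blast
    moreover have "f \<in> V" using cf(3) span_minimal[OF FV V(1)] by blast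
    then have "c \<in> V" using cf(1) v V(1) subspace_diff[of V v f] by simp
    ultimately have "c \<in> span B" using B(3) by blast
    then have "c \<in> span (B \<union> F)" using span_mono[of B "B \<union> F"] by blast
    moreover have "f \<in> span (B \<union> F)" using cf(3) span_mono[of F "B \<union> F"] by blast
    ultimately show "v \<in> span (B \<union> F)" using cf(1) span_add by blast
  qed
  have "B \<union> F \<subseteq> V" using B FV by blast
  have dV: "dim V = card (B \<union> F)"
    using basis_card_eq_dim[OF \<open>B \<union> F \<subseteq> V\<close> \<open>V \<subseteq> span (B \<union> F)\<close> indBF] by simp
  have finF: "finite F" "finite B" "finite C" using finE F_def E(1) C(1) by (auto intro: finite_subset)
  have cBF: "card (B \<union> F) = card B + card F" using BF finF card_Un_disjoint by blast
  have dU: "dim U = card C" using basis_card_eq_dim[OF C(2) C(4) C(3)] by simp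
  have dUV: "dim (U \<union> V) = card E" using basis_card_eq_dim[OF E(2) E(4) E(3)] by simp
  have "C \<inter> F = {}" using F_def by blast
  then have cE: "card E = card C + card F" using CFE finF card_Un_disjoint[of C F] by simp
  show ?thesis using dV cBF dU dUV cE B(4) by simp
qed

lemma span_Un_span: "span (span X \<union> Y) = span (X \<union> Y)"
proof -
  have "span X \<subseteq> span (X \<union> Y)" by (rule span_mono) blast
  moreover have "X \<union> Y \<subseteq> span (span X \<union> Y)"
    using span_superset[of X] span_superset[of "span X \<union> Y"] by blast
  ultimately show ?thesis unfolding span_eq using span_superset[of "X \<union> Y"] by blast
qed

lemma dim_Un_le: assumes "X \<subseteq> W" "Y \<subseteq> W" shows "dim (X \<union> Y) \<le> dim X + dim Y"
proof -
  have sX: "span X \<subseteq> W" "span Y \<subseteq> W" using span_minimal[OF _ Wsub] assms by auto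
  have "dim (span X \<union> span Y) + dim (span X \<inter> span Y) = dim (span X) + dim (span Y)"
    by (rule modular) (use sX in auto)
  moreover have "span (span X \<union> span Y) = span (X \<union> Y)"
    using span_Un_span[of X "span Y"] span_Un_span[of Y X] by (simp add: sup_commute)
  ultimately show ?thesis by (metis dim_span le_add1)
qed

lemma compl_ex: assumes A: "subspace A" "A \<subseteq> W" shows "\<exists>C. is_compl scale W A C"
proof -
  obtain BA where BA: "BA \<subseteq> A" "independent BA" "A \<subseteq> span BA" "card BA = dim A"
    using basis_exists by blast
  obtain E where E: "BA \<subseteq> E" "E \<subseteq> W" "independent E" "W \<subseteq> span E"
    using maximal_independent_subset_extend[of BA W] BA A by blast
  have finE: "finite E" using indep_fin E by blast
  define C where "C = span (E - BA)"
  have Cs: "subspace C" unfolding C_def by simp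
  have CW: "C \<subseteq> W" unfolding C_def using span_minimal[OF _ Wsub, of "E - BA"] E by blast
  have AC: "A \<union> C \<subseteq> W" using CW A by blast
  have sp: "span (A \<union> C) = W"
  proof
    show "span (A \<union> C) \<subseteq> W" using span_minimal[OF AC Wsub] .
    have "E \<subseteq> A \<union> C" using BA(1) span_superset[of "E - BA"] unfolding C_def by blast
    then show "W \<subseteq> span (A \<union> C)" using E(4) span_mono by blast
  qed
  have md: "dim (A \<union> C) + dim (A \<inter> C) = dim A + dim C" using modular[OF A Cs CW] .
  have "dim (A \<union> C) = dim W" using sp by (metis dim_span)
  also have "\<dots> = card E" using basis_card_eq_dim[OF E(2) E(4) E(3)] by simp
  finally have d1: "dim (A \<union> C) = card E" .
  have indEB: "independent (E - BA)" using independent_mono[OF E(3)] by blast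
  have d2: "dim C = card (E - BA)" unfolding C_def dim_span using dim_eq_card_independent[OF indEB] .
  have "card E = card BA + card (E - BA)" using finE E(1) card_Diff_subset[of BA E] finite_subset[OF E(1) finE]
    card_mono[OF finE E(1)] by simp
  then have "dim (A \<inter> C) = 0" using md d1 d2 BA(4) by simp
  then have "A \<inter> C \<subseteq> {0}" using dim_zero_sub A by blast
  moreover have "0 \<in> A \<inter> C" using subspace_0[OF A(1)] subspace_0[OF Cs] by blast
  ultimately have "A \<inter> C = {0}" by blast
  then show ?thesis unfolding is_compl_def using Cs CW sp by blast
qed

lemma cmpl_props: assumes "subspace A" "A \<subseteq> W" shows "is_compl scale W A (cmpl scale W A)"
  unfolding cmpl_def using compl_ex[OF assms] by (rule someI_ex)

lemma TA_props: assumes A: "subspace A" "A \<subseteq> W" and u: "u \<in> W"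
  shows "TA scale W A u \<in> cmpl scale W A \<and> u - TA scale W A u \<in> A"
proof -
  define C where "C = cmpl scale W A"
  have ic: "subspace C" "C \<subseteq> W" "span (A \<union> C) = W" "A \<inter> C = {0}"
    using cmpl_props[OF A] unfolding is_compl_def C_def by auto
  have "u \<in> span (A \<union> C)" using u ic(3) by simp
  then have "u \<in> {x + y | x y. x \<in> span A \<and> y \<in> span C}" unfolding span_Un .
  then obtain a c where ac: "u = a + c" "a \<in> span A" "c \<in> span C" by blast
  have aA: "a \<in> A" using span_minimal[OF order_refl A(1)] ac(2) by blast
  have "c \<in> C" using span_minimal[OF order_refl ic(1)] ac(3) by blast
  moreover have "u - c = a" using ac(1) by simp
  ultimately have ex: "c \<in> C \<and> u - c \<in> A" using aA by simp
  have un: "x = c" if "x \<in> C \<and> u - x \<in> A" for x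
  proof -
    have "(u - x) - (u - c) \<in> A" using that ex subspace_diff[OF A(1)] by blast
    moreover have "(u - x) - (u - c) = c - x" by (simp add: algebra_simps)
    ultimately have "c - x \<in> A" by simp
    moreover have "c - x \<in> C" using that ex subspace_diff[OF ic(1)] by blast
    ultimately have "c - x = 0" using ic(4) by blast
    then show ?thesis by simp
  qed
  have "TA scale W A u = c" unfolding TA_def C_def[symmetric]
    by (rule the_equality, rule ex, rule un, assumption)
  then have "TA scale W A u \<in> C \<and> u - TA scale W A u \<in> A" using ex by simp
  then show ?thesis unfolding C_def .
qed

lemma dim_TA_image: assumes A: "subspace A" "A \<subseteq> W" and S: "S \<subseteq> W"
  shows "dim (TA scale W A ` S) + dim A = dim (S \<union> A)"
proof -
  define P where "P = TA scale W A"
  define C where "C = cmpl scale W A"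
  have ic: "subspace C" "C \<subseteq> W" "span (A \<union> C) = W" "A \<inter> C = {0}"
    using cmpl_props[OF A] unfolding is_compl_def C_def by auto
  have Pp: "\<And>s. s \<in> S \<Longrightarrow> P s \<in> C \<and> s - P s \<in> A" using TA_props[OF A] S unfolding P_def C_def by blast
  define U where "U = span (P ` S)"
  have UC: "U \<subseteq> C" unfolding U_def using span_minimal[OF _ ic(1)] Pp by blast
  have Us: "subspace U" unfolding U_def by simp
  have md: "dim (U \<union> A) + dim (U \<inter> A) = dim U + dim A"
    using modular[OF Us _ A] UC ic(2) by blast
  have "U \<inter> A \<subseteq> {0}" using UC ic(4) by blast
  then have "dim (U \<inter> A) \<le> dim {0::'b}" using dim_mono_W[of "U \<inter> A" "{0}"] span_superset[of "{0::'b}"]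
    subspace_0[OF Wsub] by blast
  then have z: "dim (U \<inter> A) = 0" using dim_zero_set by simp
  have "span (U \<union> A) = span (S \<union> A)"
    unfolding span_eq
  proof
    have "P ` S \<subseteq> span (S \<union> A)"
    proof
      fix x assume "x \<in> P ` S"
      then obtain s where s: "s \<in> S" "x = P s" by blast
      have "s \<in> span (S \<union> A)" "s - P s \<in> span (S \<union> A)" using s Pp span_superset by blast+
      then have "s - (s - P s) \<in> span (S \<union> A)" using span_diff by blast
      then show "x \<in> span (S \<union> A)" using s by simp
    qed
    then have "U \<subseteq> span (S \<union> A)" unfolding U_def using span_minimal by blast
    then show "U \<union> A \<subseteq> span (S \<union> A)" using span_superset by blast
    have "S \<subseteq> span (U \<union> A)"
    proof
      fix s assume s: "s \<in> S"
      have "P s \<in> span (U \<union> A)" using s span_superset[of "P ` S"] span_superset[of "U \<union> A"] unfolding U_def by blast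
      moreover have "s - P s \<in> span (U \<union> A)" using s Pp span_superset by blast
      ultimately have "P s + (s - P s) \<in> span (U \<union> A)" using span_add by blast
      then show "s \<in> span (U \<union> A)" by simp
    qed
    then show "S \<union> A \<subseteq> span (U \<union> A)" using span_superset by blast
  qed
  then have "dim (U \<union> A) = dim (S \<union> A)" by (rule span_eq_dim)
  moreover have "dim U = dim (P ` S)" unfolding U_def by simp
  ultimately show ?thesis using md z P_def by simp
qed

lemma TA_bounds: assumes A: "subspace A" "A \<subseteq> W" and S: "S \<subseteq> W"
  shows "dim (TA scale W A ` S) \<le> dim S" "dim S \<le> dim (TA scale W A ` S) + dim A"
proof -
  have e: "dim (TA scale W A ` S) + dim A = dim (S \<union> A)" using dim_TA_image[OF A S] .
  have "dim (S \<union> A) \<le> dim S + dim A" using dim_Un_le S A by blast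
  then show "dim (TA scale W A ` S) \<le> dim S" using e by simp
  have "dim S \<le> dim (S \<union> A)" using dim_mono_W[of S "S \<union> A"] span_superset[of "S \<union> A"] S A by blast
  then show "dim S \<le> dim (TA scale W A ` S) + dim A" using e by simp
qed

lemma indep_sum:
  assumes "finite \<beta>" and A: "subspace A" "A \<subseteq> W"
    and BW: "\<forall>j\<in>\<beta>. subspace (B j) \<and> B j \<subseteq> W"
    and ind: "\<forall>j\<in>\<beta>. B j \<inter> span (A \<union> (\<Union>l\<in>\<beta>-{j}. B l)) \<subseteq> A"
  shows "dim (A \<union> (\<Union>j\<in>\<beta>. B j)) + (\<Sum>j\<in>\<beta>. dim (B j \<inter> A)) = dim A + (\<Sum>j\<in>\<beta>. dim (B j))"
  using assms(1) BW ind
proof (induction \<beta> rule: finite_induct)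
  case empty
  then show ?case by simp
next
  case (insert j \<beta>)
  have BW': "\<forall>l\<in>\<beta>. subspace (B l) \<and> B l \<subseteq> W" using insert.prems by blast
  have ind': "\<forall>l\<in>\<beta>. B l \<inter> span (A \<union> (\<Union>m\<in>\<beta>-{l}. B m)) \<subseteq> A"
  proof
    fix l assume l: "l \<in> \<beta>"
    have "A \<union> (\<Union>m\<in>\<beta>-{l}. B m) \<subseteq> A \<union> (\<Union>m\<in>insert j \<beta>-{l}. B m)" by blast
    then have "span (A \<union> (\<Union>m\<in>\<beta>-{l}. B m)) \<subseteq> span (A \<union> (\<Union>m\<in>insert j \<beta>-{l}. B m))"
      by (rule span_mono)
    moreover have "B l \<inter> span (A \<union> (\<Union>m\<in>insert j \<beta>-{l}. B m)) \<subseteq> A"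
      using bspec[OF insert.prems(2), of l] l by simp
    ultimately show "B l \<inter> span (A \<union> (\<Union>m\<in>\<beta>-{l}. B m)) \<subseteq> A" by blast
  qed
  have IH: "dim (A \<union> (\<Union>j\<in>\<beta>. B j)) + (\<Sum>j\<in>\<beta>. dim (B j \<inter> A)) = dim A + (\<Sum>j\<in>\<beta>. dim (B j))"
    using insert.IH[OF BW' ind'] .
  define U where "U = span (A \<union> (\<Union>j\<in>\<beta>. B j))"
  have "A \<union> (\<Union>j\<in>\<beta>. B j) \<subseteq> W" using A(2) BW' by blast
  then have UW: "U \<subseteq> W" unfolding U_def using span_minimal[OF _ Wsub] by blast
  have Bj: "subspace (B j)" "B j \<subseteq> W" using insert.prems by auto
  have md: "dim (U \<union> B j) + dim (U \<inter> B j) = dim U + dim (B j)"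
    using modular[of U "B j"] UW Bj unfolding U_def by simp
  have eqj: "insert j \<beta> - {j} = \<beta>" using insert.hyps by blast
  have "B j \<inter> U \<subseteq> A" using bspec[OF insert.prems(2) insertI1] unfolding U_def eqj .
  moreover have "A \<subseteq> U" unfolding U_def using span_superset by blast
  ultimately have "U \<inter> B j = B j \<inter> A" by blast
  moreover have "dim U = dim (A \<union> (\<Union>j\<in>\<beta>. B j))" unfolding U_def by simp
  moreover have "dim (U \<union> B j) = dim (A \<union> (\<Union>j\<in>insert j \<beta>. B j))"
  proof -
    have "span (U \<union> B j) = span ((A \<union> (\<Union>j\<in>\<beta>. B j)) \<union> B j)" unfolding U_def by (rule span_Un_span)
    moreover have "(A \<union> (\<Union>j\<in>\<beta>. B j)) \<union> B j = A \<union> (\<Union>j\<in>insert j \<beta>. B j)" by blast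
    ultimately show ?thesis by (metis dim_span)
  qed
  ultimately show ?case using md IH insert.hyps by simp
qed

lemma part1:
  assumes BW: "\<forall>j\<in>\<beta>. subspace (B j) \<and> B j \<subseteq> W" and fin: "finite \<beta>"
  shows "\<exists>A. subspace A \<and> A \<subseteq> W \<and>
         (\<forall>j\<in>\<beta>. dim (TA scale W A ` B j) = Hcond scale (B j) (\<Union>l\<in>\<beta>-{j}. B l)) \<and>
         Hs scale (\<lambda>j. TA scale W A ` B j) \<beta> = (\<Sum>j\<in>\<beta>. dim (TA scale W A ` B j)) \<and>
         int (dim A) = int (Hs scale B \<beta>) - (\<Sum>j\<in>\<beta>. int (Hcond scale (B j) (\<Union>l\<in>\<beta>-{j}. B l)))"
proof -
  define R where "R j = span (\<Union>l\<in>\<beta>-{j}. B l)" for j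
  define A where "A = span (\<Union>l\<in>\<beta>. B l \<inter> R l)"
  define P where "P = TA scale W A"
  define Hc where "Hc j = Hcond scale (B j) (\<Union>l\<in>\<beta>-{j}. B l)" for j
  have RW: "subspace (R j)" "R j \<subseteq> W" for j
  proof -
    have "(\<Union>l\<in>\<beta>-{j}. B l) \<subseteq> W" using BW by blast
    then show "R j \<subseteq> W" unfolding R_def using span_minimal[OF _ Wsub] by blast
    show "subspace (R j)" unfolding R_def by simp
  qed
  have As: "subspace A" unfolding A_def by simp
  have "(\<Union>l\<in>\<beta>. B l \<inter> R l) \<subseteq> W" using BW by blast
  then have AW: "A \<subseteq> W" unfolding A_def using span_minimal[OF _ Wsub] by blast
  have AR: "A \<subseteq> R j" if "j \<in> \<beta>" for j
  proof -
    have "(\<Union>l\<in>\<beta>. B l \<inter> R l) \<subseteq> R j"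
    proof
      fix x assume "x \<in> (\<Union>l\<in>\<beta>. B l \<inter> R l)"
      then obtain l where l: "l \<in> \<beta>" "x \<in> B l" "x \<in> R l" by blast
      show "x \<in> R j"
      proof (cases "l = j")
        case True then show ?thesis using l by simp
      next
        case False
        then have "x \<in> (\<Union>l\<in>\<beta>-{j}. B l)" using l by blast
        then show ?thesis unfolding R_def by (rule span_base)
      qed
    qed
    then show ?thesis unfolding A_def by (rule span_minimal[OF _ RW(1)])
  qed
  have BA: "B j \<inter> A = B j \<inter> R j" if "j \<in> \<beta>" for j
  proof
    show "B j \<inter> A \<subseteq> B j \<inter> R j" using AR[OF that] by blast
    show "B j \<inter> R j \<subseteq> B j \<inter> A"
    proof
      fix x assume x: "x \<in> B j \<inter> R j"
      then have "x \<in> (\<Union>l\<in>\<beta>. B l \<inter> R l)" using that by blast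
      then have "x \<in> A" unfolding A_def by (rule span_base)
      then show "x \<in> B j \<inter> A" using x by blast
    qed
  qed
  have Hcj: "Hc j + dim (B j \<inter> A) = dim (B j)" if j: "j \<in> \<beta>" for j
  proof -
    have Bj: "subspace (B j)" "B j \<subseteq> W" using BW j by auto
    have md: "dim (B j \<union> R j) + dim (B j \<inter> R j) = dim (B j) + dim (R j)" using modular[OF Bj RW] .
    have "dim (B j \<inter> R j) \<le> dim (B j)" using dim_mono_W[of "B j \<inter> R j" "B j"] Bj span_superset[of "B j"] by blast
    moreover have "dim (B j \<union> (\<Union>l\<in>\<beta>-{j}. B l)) = dim (B j \<union> R j)"
      unfolding R_def using span_Un_span[of "\<Union>l\<in>\<beta>-{j}. B l" "B j"] by (metis dim_span sup_commute)
    moreover have "dim (\<Union>l\<in>\<beta>-{j}. B l) = dim (R j)" unfolding R_def by simp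
    ultimately show ?thesis using md BA[OF j] unfolding Hc_def Hcond_def by simp
  qed
  have Pj: "dim (P ` B j) + dim (B j \<inter> A) = dim (B j)" if j: "j \<in> \<beta>" for j
  proof -
    have Bj: "subspace (B j)" "B j \<subseteq> W" using BW j by auto
    have "dim (P ` B j) + dim A = dim (B j \<union> A)" unfolding P_def using dim_TA_image[OF As AW Bj(2)] .
    moreover have "dim (B j \<union> A) + dim (B j \<inter> A) = dim (B j) + dim A" using modular[OF Bj As AW] .
    ultimately show ?thesis by simp
  qed
  have c1: "\<forall>j\<in>\<beta>. dim (P ` B j) = Hc j"
  proof
    fix j assume "j \<in> \<beta>" then show "dim (P ` B j) = Hc j" using Pj[of j] Hcj[of j] by linarith
  qed
  have ind: "\<forall>j\<in>\<beta>. B j \<inter> span (A \<union> (\<Union>l\<in>\<beta>-{j}. B l)) \<subseteq> A"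
  proof
    fix j assume j: "j \<in> \<beta>"
    have "(\<Union>l\<in>\<beta>-{j}. B l) \<subseteq> R j" unfolding R_def by (rule span_superset)
    then have "A \<union> (\<Union>l\<in>\<beta>-{j}. B l) \<subseteq> R j" using AR[OF j] by (rule Un_least[rotated])
    then have "span (A \<union> (\<Union>l\<in>\<beta>-{j}. B l)) \<subseteq> R j" by (rule span_minimal[OF _ RW(1)])
    then show "B j \<inter> span (A \<union> (\<Union>l\<in>\<beta>-{j}. B l)) \<subseteq> A" using BA[OF j] by blast
  qed
  have L: "dim (A \<union> (\<Union>j\<in>\<beta>. B j)) + (\<Sum>j\<in>\<beta>. dim (B j \<inter> A)) = dim A + (\<Sum>j\<in>\<beta>. dim (B j))"
    using indep_sum[OF fin As AW BW ind] .
  have "A \<subseteq> span (\<Union>j\<in>\<beta>. B j)" unfolding A_def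
    by (rule span_mono) blast
  then have "span (A \<union> (\<Union>j\<in>\<beta>. B j)) = span (\<Union>j\<in>\<beta>. B j)"
  proof -
    have "A \<union> (\<Union>j\<in>\<beta>. B j) \<subseteq> span (\<Union>j\<in>\<beta>. B j)"
      using \<open>A \<subseteq> span (\<Union>j\<in>\<beta>. B j)\<close> span_superset[of "\<Union>j\<in>\<beta>. B j"] by (rule Un_least)
    moreover have "(\<Union>j\<in>\<beta>. B j) \<subseteq> span (A \<union> (\<Union>j\<in>\<beta>. B j))"
      using span_superset[of "A \<union> (\<Union>j\<in>\<beta>. B j)"] by blast
    ultimately show ?thesis unfolding span_eq by (rule conjI)
  qed
  then have dAB: "dim (A \<union> (\<Union>j\<in>\<beta>. B j)) = Hs scale B \<beta>" unfolding Hs_def by (metis dim_span)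
  have sumB: "(\<Sum>j\<in>\<beta>. dim (B j)) = (\<Sum>j\<in>\<beta>. Hc j) + (\<Sum>j\<in>\<beta>. dim (B j \<inter> A))"
    using Hcj by (simp add: sum.distrib[symmetric])
  have c3: "Hs scale B \<beta> = dim A + (\<Sum>j\<in>\<beta>. Hc j)" using L dAB sumB by simp
  have BWs: "(\<Union>j\<in>\<beta>. B j) \<subseteq> W" using BW by blast
  have e1: "dim (P ` (\<Union>j\<in>\<beta>. B j)) + dim A = dim ((\<Union>j\<in>\<beta>. B j) \<union> A)"
    unfolding P_def using dim_TA_image[OF As AW BWs] .
  have "(\<Union>j\<in>\<beta>. B j) \<union> A = A \<union> (\<Union>j\<in>\<beta>. B j)" by blast
  then have e2: "dim ((\<Union>j\<in>\<beta>. B j) \<union> A) = Hs scale B \<beta>" using dAB by (simp only:)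
  have e3: "P ` (\<Union>j\<in>\<beta>. B j) = (\<Union>j\<in>\<beta>. P ` B j)" by blast
  have "dim (\<Union>j\<in>\<beta>. P ` B j) + dim A = Hs scale B \<beta>" using e1 e2 unfolding e3 by (simp only:)
  then have "dim (\<Union>j\<in>\<beta>. P ` B j) = (\<Sum>j\<in>\<beta>. Hc j)" using c3 by linarith
  then have "Hs scale (\<lambda>j. P ` B j) \<beta> = (\<Sum>j\<in>\<beta>. Hc j)" unfolding Hs_def .
  moreover have "(\<Sum>j\<in>\<beta>. Hc j) = (\<Sum>j\<in>\<beta>. dim (P ` B j))" using c1 by (intro sum.cong) auto
  ultimately have c2: "Hs scale (\<lambda>j. P ` B j) \<beta> = (\<Sum>j\<in>\<beta>. dim (P ` B j))" by simp
  have "int (Hs scale B \<beta>) = int (dim A) + int (\<Sum>j\<in>\<beta>. Hc j)" using c3 by (simp only: of_nat_add)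
  moreover have "int (\<Sum>j\<in>\<beta>. Hc j) = (\<Sum>j\<in>\<beta>. int (Hc j))" by (rule of_nat_sum)
  ultimately have hA: "int (dim A) = int (Hs scale B \<beta>) - (\<Sum>j\<in>\<beta>. int (Hc j))" by linarith
  show ?thesis
    by (insert As AW c1 c2 hA, unfold P_def Hc_def, intro exI[of _ A] conjI, assumption+)
qed

end

theorem lemma5:
  fixes sc :: "'f::{field,finite} \<Rightarrow> 'v::ab_group_add \<Rightarrow> 'v"
  assumes vs: "vector_space sc"
  shows
  "(\<forall>(W::'v set) (B::nat \<Rightarrow> 'v set) (n::nat) (\<beta>::nat set).
      module.subspace sc W \<and> fin_dim sc W \<and>
      (\<forall>j\<in>{1..n}. module.subspace sc (B j) \<and> B j \<subseteq> W) \<and> \<beta> \<subseteq> {1..n} \<longrightarrow>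
      (\<exists>A. module.subspace sc A \<and> A \<subseteq> W \<and>
         (\<forall>j\<in>\<beta>. vector_space.dim sc (TA sc W A ` B j)
                  = Hcond sc (B j) (\<Union>l\<in>\<beta>-{j}. B l)) \<and>
         Hs sc (\<lambda>j. TA sc W A ` B j) \<beta>
           = (\<Sum>j\<in>\<beta>. vector_space.dim sc (TA sc W A ` B j)) \<and>
         int (vector_space.dim sc A)
           = int (Hs sc B \<beta>) - (\<Sum>j\<in>\<beta>. int (Hcond sc (B j) (\<Union>l\<in>\<beta>-{j}. B l)))))
   \<and>
   (\<forall>(W::nat \<Rightarrow> 'v set) (B::nat \<Rightarrow> nat \<Rightarrow> 'v set) (n::nat) (\<beta>::nat set) (k::nat \<Rightarrow> real).
      (\<forall>i. module.subspace sc (W i) \<and> fin_dim sc (W i) \<and>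
           (\<forall>j\<in>{1..n}. module.subspace sc (B i j) \<and> B i j \<subseteq> W i) \<and> k i > 0) \<and>
      \<beta> \<subseteq> {1..n} \<and>
      (\<lambda>i. (real (Hs sc (B i) \<beta>)
             - (\<Sum>j\<in>\<beta>. real (Hcond sc (B i j) (\<Union>l\<in>\<beta>-{j}. B i l)))) / k i)
        \<longlonglongrightarrow> 0 \<longrightarrow>
      (\<exists>A::nat \<Rightarrow> 'v set.
         (\<forall>i. module.subspace sc (A i) \<and> A i \<subseteq> W i) \<and>
         (\<forall>i. (\<Sum>j\<in>\<beta>. vector_space.dim sc (TA sc (W i) (A i) ` B i j))
               = Hs sc (\<lambda>j. TA sc (W i) (A i) ` B i j) \<beta>) \<and>
         (\<forall>\<alpha>. \<alpha> \<subseteq> {1..n} \<longrightarrow> (\<forall>L::real.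
            ((\<lambda>i. real (Hs sc (\<lambda>j. TA sc (W i) (A i) ` B i j) \<alpha>) / k i) \<longlonglongrightarrow> L)
            \<longleftrightarrow> ((\<lambda>i. real (Hs sc (B i) \<alpha>) / k i) \<longlonglongrightarrow> L)))))"
proof -
  have P1: "\<And>W B n \<beta>. module.subspace sc W \<Longrightarrow> fin_dim sc W \<Longrightarrow>
      (\<forall>j\<in>{1..n}. module.subspace sc (B j) \<and> B j \<subseteq> W) \<Longrightarrow> \<beta> \<subseteq> {1..(n::nat)} \<Longrightarrow>
      (\<exists>A. module.subspace sc A \<and> A \<subseteq> W \<and>
         (\<forall>j\<in>\<beta>. vector_space.dim sc (TA sc W A ` B j)
                  = Hcond sc (B j) (\<Union>l\<in>\<beta>-{j}. B l)) \<and>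
         Hs sc (\<lambda>j. TA sc W A ` B j) \<beta>
           = (\<Sum>j\<in>\<beta>. vector_space.dim sc (TA sc W A ` B j)) \<and>
         int (vector_space.dim sc A)
           = int (Hs sc B \<beta>) - (\<Sum>j\<in>\<beta>. int (Hcond sc (B j) (\<Union>l\<in>\<beta>-{j}. B l))))"
  proof -
    fix W B n \<beta>
    assume a: "module.subspace sc W" "fin_dim sc W" "\<forall>j\<in>{1..n}. module.subspace sc (B j) \<and> B j \<subseteq> W"
      "\<beta> \<subseteq> {1..(n::nat)}"
    interpret fdW sc W using vs a(1,2) by (simp add: fdW_def fdW_axioms_def)
    have "finite \<beta>" using a(4) finite_subset by blast
    moreover have "\<forall>j\<in>\<beta>. subspace (B j) \<and> B j \<subseteq> W" using a(3,4) by blast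
    ultimately show "?thesis W B n \<beta>" using part1 by blast
  qed
  show ?thesis
  proof (intro conjI allI impI)
    fix W B n \<beta> assume "module.subspace sc (W::'v set) \<and> fin_dim sc W \<and>
      (\<forall>j\<in>{1..n}. module.subspace sc (B j) \<and> B j \<subseteq> W) \<and> \<beta> \<subseteq> {1..(n::nat)}"
    then show "\<exists>A. module.subspace sc A \<and> A \<subseteq> W \<and>
         (\<forall>j\<in>\<beta>. vector_space.dim sc (TA sc W A ` B j)
                  = Hcond sc (B j) (\<Union>l\<in>\<beta>-{j}. B l)) \<and>
         Hs sc (\<lambda>j. TA sc W A ` B j) \<beta>
           = (\<Sum>j\<in>\<beta>. vector_space.dim sc (TA sc W A ` B j)) \<and>
         int (vector_space.dim sc A)
           = int (Hs sc B \<beta>) - (\<Sum>j\<in>\<beta>. int (Hcond sc (B j) (\<Union>l\<in>\<beta>-{j}. B l)))"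
      using P1 by blast
  next
    fix W :: "nat \<Rightarrow> 'v set" and B :: "nat \<Rightarrow> nat \<Rightarrow> 'v set" and n :: nat and \<beta> :: "nat set" and k :: "nat \<Rightarrow> real"
    assume a: "(\<forall>i. module.subspace sc (W i) \<and> fin_dim sc (W i) \<and>
           (\<forall>j\<in>{1..n}. module.subspace sc (B i j) \<and> B i j \<subseteq> W i) \<and> k i > 0) \<and>
      \<beta> \<subseteq> {1..n} \<and>
      (\<lambda>i. (real (Hs sc (B i) \<beta>)
             - (\<Sum>j\<in>\<beta>. real (Hcond sc (B i j) (\<Union>l\<in>\<beta>-{j}. B i l)))) / k i)
        \<longlonglongrightarrow> 0"
    define Q where "Q i A \<longleftrightarrow> module.subspace sc A \<and> A \<subseteq> W i \<and>
         (\<Sum>j\<in>\<beta>. vector_space.dim sc (TA sc (W i) A ` B i j)) = Hs sc (\<lambda>j. TA sc (W i) A ` B i j) \<beta> \<and>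
         int (vector_space.dim sc A)
           = int (Hs sc (B i) \<beta>) - (\<Sum>j\<in>\<beta>. int (Hcond sc (B i j) (\<Union>l\<in>\<beta>-{j}. B i l))) \<and>
         (\<forall>X. X \<subseteq> W i \<longrightarrow> vector_space.dim sc (TA sc (W i) A ` X) \<le> vector_space.dim sc X \<and>
              vector_space.dim sc X \<le> vector_space.dim sc (TA sc (W i) A ` X) + vector_space.dim sc A)" for i A
    have "\<forall>i. \<exists>A. Q i A"
    proof
      fix i
      have ai: "module.subspace sc (W i)" "fin_dim sc (W i)" "\<forall>j\<in>{1..n}. module.subspace sc (B i j) \<and> B i j \<subseteq> W i"
        "\<beta> \<subseteq> {1..n}" using a by auto
      interpret fdW sc "W i" using vs ai(1,2) by (simp add: fdW_def fdW_axioms_def)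
      obtain A where A: "module.subspace sc A" "A \<subseteq> W i"
        "Hs sc (\<lambda>j. TA sc (W i) A ` B i j) \<beta> = (\<Sum>j\<in>\<beta>. vector_space.dim sc (TA sc (W i) A ` B i j))"
        "int (vector_space.dim sc A)
           = int (Hs sc (B i) \<beta>) - (\<Sum>j\<in>\<beta>. int (Hcond sc (B i j) (\<Union>l\<in>\<beta>-{j}. B i l)))"
        using P1[OF ai] by blast
      have bds: "\<forall>X. X \<subseteq> W i \<longrightarrow> dim (TA sc (W i) A ` X) \<le> dim X \<and> dim X \<le> dim (TA sc (W i) A ` X) + dim A"
        using TA_bounds[OF A(1,2)] by blast
      have "Q i A" unfolding Q_def
        by (insert A(1,2,4) A(3)[symmetric] bds, intro conjI, assumption+)
      then show "\<exists>A. Q i A" by (rule exI)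
    qed
    from choice[OF this] obtain A where A0: "\<forall>i. Q i (A i)" by blast
    have A: "Q i (A i)" for i using A0 by blast
    define D where "D i = real (vector_space.dim sc (A i))" for i
    have "D i = real (Hs sc (B i) \<beta>) - (\<Sum>j\<in>\<beta>. real (Hcond sc (B i j) (\<Union>l\<in>\<beta>-{j}. B i l)))" for i
    proof -
      have "int (vector_space.dim sc (A i))
           = int (Hs sc (B i) \<beta>) - (\<Sum>j\<in>\<beta>. int (Hcond sc (B i j) (\<Union>l\<in>\<beta>-{j}. B i l)))"
        using A[of i] unfolding Q_def by blast
      then have "real_of_int (int (vector_space.dim sc (A i)))
           = real_of_int (int (Hs sc (B i) \<beta>) - (\<Sum>j\<in>\<beta>. int (Hcond sc (B i j) (\<Union>l\<in>\<beta>-{j}. B i l))))"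
        by (rule arg_cong)
      then show ?thesis unfolding D_def by simp
    qed
    then have "(\<lambda>i. D i / k i) = (\<lambda>i. (real (Hs sc (B i) \<beta>)
             - (\<Sum>j\<in>\<beta>. real (Hcond sc (B i j) (\<Union>l\<in>\<beta>-{j}. B i l)))) / k i)" by (intro ext) (simp only:)
    moreover have "(\<lambda>i. (real (Hs sc (B i) \<beta>)
             - (\<Sum>j\<in>\<beta>. real (Hcond sc (B i j) (\<Union>l\<in>\<beta>-{j}. B i l)))) / k i)
        \<longlonglongrightarrow> 0" using a by blast
    ultimately have Dlim: "(\<lambda>i. D i / k i) \<longlonglongrightarrow> 0" by (simp only:)
    show "\<exists>A::nat \<Rightarrow> 'v set.
         (\<forall>i. module.subspace sc (A i) \<and> A i \<subseteq> W i) \<and>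
         (\<forall>i. (\<Sum>j\<in>\<beta>. vector_space.dim sc (TA sc (W i) (A i) ` B i j))
               = Hs sc (\<lambda>j. TA sc (W i) (A i) ` B i j) \<beta>) \<and>
         (\<forall>\<alpha>. \<alpha> \<subseteq> {1..n} \<longrightarrow> (\<forall>L::real.
            ((\<lambda>i. real (Hs sc (\<lambda>j. TA sc (W i) (A i) ` B i j) \<alpha>) / k i) \<longlonglongrightarrow> L)
            \<longleftrightarrow> ((\<lambda>i. real (Hs sc (B i) \<alpha>) / k i) \<longlonglongrightarrow> L)))"
    proof (rule exI[of _ A], intro conjI)
      show "\<forall>i. module.subspace sc (A i) \<and> A i \<subseteq> W i"
      proof
        fix i show "module.subspace sc (A i) \<and> A i \<subseteq> W i" using A[of i] unfolding Q_def by blast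
      qed
    next
      show "\<forall>i. (\<Sum>j\<in>\<beta>. vector_space.dim sc (TA sc (W i) (A i) ` B i j))
               = Hs sc (\<lambda>j. TA sc (W i) (A i) ` B i j) \<beta>"
      proof
        fix i show "(\<Sum>j\<in>\<beta>. vector_space.dim sc (TA sc (W i) (A i) ` B i j))
               = Hs sc (\<lambda>j. TA sc (W i) (A i) ` B i j) \<beta>" using A[of i] unfolding Q_def by blast
      qed
    next
      show "\<forall>\<alpha>. \<alpha> \<subseteq> {1..n} \<longrightarrow> (\<forall>L::real.
            ((\<lambda>i. real (Hs sc (\<lambda>j. TA sc (W i) (A i) ` B i j) \<alpha>) / k i) \<longlonglongrightarrow> L)
            \<longleftrightarrow> ((\<lambda>i. real (Hs sc (B i) \<alpha>) / k i) \<longlonglongrightarrow> L))"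
      proof (intro allI impI)
      fix \<alpha> :: "nat set" and L :: real assume al: "\<alpha> \<subseteq> {1..n}"
      define f where "f i = real (Hs sc (\<lambda>j. TA sc (W i) (A i) ` B i j) \<alpha>) / k i" for i
      define g where "g i = real (Hs sc (B i) \<alpha>) / k i" for i
      have bnd: "0 \<le> g i - f i \<and> g i - f i \<le> D i / k i" for i
      proof -
        define X where "X = (\<Union>j\<in>\<alpha>. B i j)"
        have XW: "X \<subseteq> W i" unfolding X_def using a al by blast
        have img: "(\<Union>j\<in>\<alpha>. TA sc (W i) (A i) ` B i j) = TA sc (W i) (A i) ` X" unfolding X_def by blast
        have b: "vector_space.dim sc (TA sc (W i) (A i) ` X) \<le> vector_space.dim sc X"
          "vector_space.dim sc X \<le> vector_space.dim sc (TA sc (W i) (A i) ` X) + vector_space.dim sc (A i)"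
          using A[of i] XW unfolding Q_def by blast+
        have kp: "k i > 0" using a by blast
        have fe: "f i = real (vector_space.dim sc (TA sc (W i) (A i) ` X)) / k i"
          unfolding f_def Hs_def img ..
        have ge: "g i = real (vector_space.dim sc X) / k i" unfolding g_def Hs_def X_def ..
        have "g i - f i = (real (vector_space.dim sc X) - real (vector_space.dim sc (TA sc (W i) (A i) ` X))) / k i"
          unfolding fe ge by (simp add: diff_divide_distrib)
        moreover have "0 \<le> real (vector_space.dim sc X) - real (vector_space.dim sc (TA sc (W i) (A i) ` X))"
          using b(1) by simp
        moreover have "real (vector_space.dim sc X) - real (vector_space.dim sc (TA sc (W i) (A i) ` X)) \<le> D i"
          using b(2) unfolding D_def by simp
        ultimately show ?thesis using kp by (simp add: divide_right_mono)
      qed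
      have dl: "(\<lambda>i. g i - f i) \<longlonglongrightarrow> 0"
      proof (rule tendsto_sandwich[of "\<lambda>i. 0" _ _ "\<lambda>i. D i / k i"])
        show "\<forall>\<^sub>F i in sequentially. 0 \<le> g i - f i" using bnd by (simp add: always_eventually)
        show "\<forall>\<^sub>F i in sequentially. g i - f i \<le> D i / k i" using bnd by (simp add: always_eventually)
        show "(\<lambda>i. 0::real) \<longlonglongrightarrow> 0" by (rule tendsto_const)
        show "(\<lambda>i. D i / k i) \<longlonglongrightarrow> 0" by (rule Dlim)
      qed
      have "(\<lambda>i. f i - g i) \<longlonglongrightarrow> 0" using tendsto_minus[OF dl] by simp
      have "(f \<longlonglongrightarrow> L) \<longleftrightarrow> (g \<longlonglongrightarrow> L)"
      proof
        assume "f \<longlonglongrightarrow> L" then show "g \<longlonglongrightarrow> L" using dl by (rule Lim_transform)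
      next
        assume "g \<longlonglongrightarrow> L" then show "f \<longlonglongrightarrow> L" using \<open>(\<lambda>i. f i - g i) \<longlonglongrightarrow> 0\<close> by (rule Lim_transform)
      qed
      then show "((\<lambda>i. real (Hs sc (\<lambda>j. TA sc (W i) (A i) ` B i j) \<alpha>) / k i) \<longlonglongrightarrow> L)
            \<longleftrightarrow> ((\<lambda>i. real (Hs sc (B i) \<alpha>) / k i) \<longlonglongrightarrow> L)" unfolding f_def g_def .
      qed
    qed
  qed
qed

end
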